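(* Let $p$ be a prime, $\alpha,\beta\ge1$, $x_0\in\mathbb{Z}_{p^\alpha}$, and let $\hat x_0\in\{0,\dots,p^\alpha-1\}$ be its least nonnegative representative. Let $\binom{0}{X-x_0}_{p^\alpha,p^\beta}$ be the map $\mathbb{Z}\to\mathbb{Z}_{p^\beta}$ with value $1$ at $x\equiv x_0\pmod{p^\alpha}$ and $0$ elsewhere. Then, with $d:=p^\alpha-1+(\beta-1)(p-1)p^{\alpha-1}$, $$\binom{0}{X-x_0}_{p^\alpha,p^\beta}=\sum_{\delta=0}^d\binom{\delta}{\delta-x_0}_{p^\alpha,p^\beta}\binom{X}{\delta}\in\mathbb{Z}_{p^\beta}\binom{X}{\mathbb{Z}_{p^\alpha}},$$ where $\delta-x_0$ is the residue class of $\delta-\hat x_0$ modulo $p^\alpha$. For $\beta=1$ this specializes to $$\binom{0}{X-x_0}_{p^\alpha,p}=\sum_{\delta=\hat x_0}^{p^\alpha-1}(-1)^{\delta-\hat x_0}\binom{\delta}{\delta-\hat x_0}\binom{X}{\delta}\quad(\text{coefficients mod }p),$$ and in particular $\binom{0}{X}_{p^\alpha,p}=\binom{X}{0}-\binom{X}{1}+\binom{X}{2}\mp\cdots+(-1)^{p^\alpha-1}\binom{X}{p^\alpha-1}$ over $\mathbb{Z}_p$.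
   Context: $\mathbb{Z}_r=\mathbb{Z}/r\mathbb{Z}$; $\binom{X}{\delta}=X(X-1)\cdots(X-\delta+1)/\delta!$, $\binom{X}{0}=1$. For integers $d\ge0$, $q\ge1$, $r\ge0$ and $x\in\mathbb{Z}_q$: $\binom{d}{x}_q:=\sum_{\hat x\in x,\,\hat x\ge0}(-1)^{\hat x}\binom{d}{\hat x}\in\mathbb{Z}$ and $\binom{d}{x}_{q,r}:=\binom{d}{x}_q+r\mathbb{Z}$. An equality between a map $\mathbb{Z}\to\mathbb{Z}_r$ and a polyfract $\sum_\delta P_\delta\binom{X}{\delta}$ ($P_\delta\in\mathbb{Z}_r$) means the map equals $x\mapsto\sum_\delta\binom{x}{\delta}P_\delta$. $\mathbb{Z}_r\binom{X}{\mathbb{Z}_q}$ denotes the set of such polyfracts whose map is $q$-periodic. *)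

theory Defs
  imports "HOL-Number_Theory.Number_Theory"
begin

text \<open>The integer binom(d, x)_q for the residue class of the integer x modulo q:
  the sum over all nonnegative representatives k of the class of (-1)^k * (d choose k).
  Terms with k > d vanish, so only k \<le> d are summed.\<close>
definition binom_q :: "nat \<Rightarrow> nat \<Rightarrow> int \<Rightarrow> int" where
  "binom_q d q x = (\<Sum>k | k \<le> d \<and> [int k = x] (mod int q). (-1)^k * int (d choose k))"

text \<open>Binomial coefficient binom(X, delta) = X(X-1)...(X-delta+1)/delta! at an integer X
  (the division is exact).\<close>
definition int_binom :: "int \<Rightarrow> nat \<Rightarrow> int" where
  "int_binom x \<delta> = (\<Prod>i<\<delta>. x - int i) div fact \<delta>"

text \<open>The integer-valued map x \<mapsto> sum_{delta=0}^{d} binom(x, delta) * P delta (on all of Z);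
  an equality with values in Z_r is a congruence modulo r.\<close>
definition polyfract_eval :: "(nat \<Rightarrow> int) \<Rightarrow> nat \<Rightarrow> int \<Rightarrow> int" where
  "polyfract_eval P d x = (\<Sum>\<delta>\<le>d. int_binom x \<delta> * P \<delta>)"

definition indicator_res :: "nat \<Rightarrow> int \<Rightarrow> int \<Rightarrow> int" where
  "indicator_res q x0 x = (if [x = x0] (mod int q) then 1 else 0)"

end

theory Submission
  imports Defs
begin

definition Sh :: "int \<Rightarrow> (int \<Rightarrow> int) \<Rightarrow> int \<Rightarrow> int" where
  "Sh t f x = f (x + t) - f x"

lemma Sh_pow:
  "((Sh t) ^^ n) f x = (\<Sum>j\<le>n. (-1)^(n+j) * int (n choose j) * f (x + t * int j))"
proof (induction n arbitrary: x)
  case 0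
  then show ?case by simp
next
  case (Suc n)
  define g where "g j = f (x + t * int j)" for j
  have L: "((Sh t) ^^ Suc n) f x = (\<Sum>j\<le>n. (-1)^(n+j) * int (n choose j) * g (Suc j))
          - (\<Sum>j\<le>n. (-1)^(n+j) * int (n choose j) * g j)"
    by (simp add: Sh_def Suc g_def algebra_simps)
  have A: "(\<Sum>j\<le>n. (-1)^(n+j) * int (n choose j) * g j)
        = (-1)^n * g 0 - (\<Sum>j\<le>n. (-1)^(n+j) * int (n choose Suc j) * g (Suc j))"
  proof -
    have "(\<Sum>j\<le>n. (-1)^(n+j) * int (n choose j) * g j) = (\<Sum>j\<le>Suc n. (-1)^(n+j) * int (n choose j) * g j)"
      by simp
    also have "\<dots> = (-1)^n * g 0 + (\<Sum>j\<le>n. (-1)^(n+Suc j) * int (n choose Suc j) * g (Suc j))"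
      by (subst sum.atMost_Suc_shift) simp
    also have "\<dots> = (-1)^n * g 0 - (\<Sum>j\<le>n. (-1)^(n+j) * int (n choose Suc j) * g (Suc j))"
      by (simp add: sum_negf[symmetric])
    finally show ?thesis .
  qed
  have R: "(\<Sum>j\<le>Suc n. (-1)^(Suc n+j) * int (Suc n choose j) * g j)
      = - ((-1)^n * g 0) + (\<Sum>j\<le>n. (-1)^(n+j) * int (n choose j) * g (Suc j))
        + (\<Sum>j\<le>n. (-1)^(n+j) * int (n choose Suc j) * g (Suc j))"
    by (subst sum.atMost_Suc_shift) (simp add: algebra_simps sum.distrib)
  show ?case using L A R by (simp add: g_def)
qed

lemma Sh_pow_diff: "((Sh t)^^n) (\<lambda>y. f y - g y) x = ((Sh t)^^n) f x - ((Sh t)^^n) g x"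
  by (simp add: Sh_pow sum_subtractf[symmetric] algebra_simps)

lemma Sh_pow_add: "((Sh t)^^n) (\<lambda>y. f y + g y) x = ((Sh t)^^n) f x + ((Sh t)^^n) g x"
  by (simp add: Sh_pow sum.distrib[symmetric] algebra_simps)

lemma Sh_pow_cmult: "((Sh t)^^n) (\<lambda>y. c * f y) x = c * ((Sh t)^^n) f x"
  by (simp add: Sh_pow sum_distrib_left algebra_simps)

lemma Sh_pow_sum: "((Sh t)^^n) (\<lambda>y. \<Sum>i\<in>I. f i y) x = (\<Sum>i\<in>I. ((Sh t)^^n) (f i) x)"
  by (simp add: Sh_pow sum_distrib_left sum.swap[of _ I] algebra_simps)

lemma Sh_pow_shift: "((Sh t)^^n) (\<lambda>y. f (y + c)) x = ((Sh t)^^n) f (x + c)"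
  unfolding Sh_pow by (rule sum.cong) (simp_all add: ac_simps)

lemma Sh_pow_zero: "((Sh t)^^n) (\<lambda>y. 0) x = 0"
  by (simp add: Sh_pow)

lemma Sh_pow_dvd: "(\<And>y. m dvd f y) \<Longrightarrow> m dvd ((Sh t)^^n) f x"
  by (simp add: Sh_pow dvd_sum)

lemma Sh_pow_cong: "(\<And>y. [f y = g y] (mod m)) \<Longrightarrow> [((Sh t)^^n) f x = ((Sh t)^^n) g x] (mod m)"
  unfolding Sh_pow by (intro cong_sum cong_mult cong_refl) auto

lemma iter_cong:
  assumes "\<And>g y. [((Sh 1)^^N) g y = Sh t g y] (mod m)"
  shows "[(((Sh 1)^^N)^^k) f x = ((Sh t)^^k) f x] (mod m)"
proof (induction k arbitrary: x)
  case 0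
  then show ?case by simp
next
  case (Suc k)
  have 1: "[((Sh 1)^^N) ((((Sh 1)^^N)^^k) f) x = ((Sh 1)^^N) (((Sh t)^^k) f) x] (mod m)"
    by (rule Sh_pow_cong) (rule Suc)
  have 2: "[((Sh 1)^^N) (((Sh t)^^k) f) x = Sh t (((Sh t)^^k) f) x] (mod m)" by (rule assms)
  show ?case using cong_trans[OF 1 2] by simp
qed

lemma neg1_pow_prime: "prime (p::nat) \<Longrightarrow> [(-1::int)^p = -1] (mod int p)"
proof -
  assume pr: "prime p"
  show ?thesis
  proof (cases "p = 2")
    case True
    then show ?thesis by (simp add: cong_def)
  next
    case False
    have "p \<ge> 2" using pr prime_ge_2_nat by blast
    then have "odd p" using False prime_odd_nat[OF pr] by simp
    then show ?thesis by simp
  qed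
qed

lemma Sh_p:
  assumes "prime p"
  shows "[((Sh t)^^p) f x = Sh (t * int p) f x] (mod int p)"
proof -
  have p0: "p > 0" using assms prime_gt_0_nat by blast
  have C: "[(\<Sum>j\<le>p. (-1)^(p+j) * int (p choose j) * f (x + t * int j)) = (\<Sum>j\<le>p. (if j = 0 then - f x else 0) + (if j = p then f (x + t * int p) else 0))] (mod int p)"
  proof (rule cong_sum)
    fix j assume j: "j \<in> {..p}"
    show "[(-1)^(p+j) * int (p choose j) * f (x + t * int j) =
         (if j = 0 then - f x else 0) + (if j = p then f (x + t * int p) else 0)] (mod int p)"
    proof (cases "j = 0")
      case True
      then show ?thesis using p0 cong_mult[OF neg1_pow_prime[OF assms] cong_refl[of "f x"]] by simp
    next
      case False
      show ?thesis
      proof (cases "j = p")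
        case True
        have "(-1::int)^(p+p) = 1" by (rule neg_one_even_power) simp
        then show ?thesis using True p0 by simp
      next
        case False
        note False2 = this
        then have "p dvd (p choose j)" using \<open>j \<noteq> 0\<close> j dvd_choose_prime[OF _ _ _ assms] p0 by auto
        then have "int p dvd (-1)^(p+j) * int (p choose j) * f (x + t * int j)"
          by (simp add: int_dvd_int_iff)
        then show ?thesis using \<open>j \<noteq> 0\<close> False2 by (simp add: cong_0_iff)
      qed
    qed
  qed
  have E: "(\<Sum>j\<le>p. (if j = 0 then - f x else 0) + (if j = p then f (x + t * int p) else 0)) = Sh (t * int p) f x"
    using p0 by (simp add: sum.distrib Sh_def)
  show ?thesis using C by (simp only: E Sh_pow)
qed

lemma D_ppow:
  assumes "prime p"
  shows "[((Sh 1)^^(p^k)) f x = Sh (int (p^k)) f x] (mod int p)"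
proof (induction k arbitrary: f x)
  case 0
  then show ?case by simp
next
  case (Suc k)
  have e: "(Sh 1)^^(p^Suc k) = ((Sh 1)^^(p^k))^^p" by (simp add: funpow_mult mult.commute)
  have 1: "[(((Sh 1)^^(p^k))^^p) f x = ((Sh (int (p^k)))^^p) f x] (mod int p)"
    by (rule iter_cong) (rule Suc.IH)
  have 2: "[((Sh (int (p^k)))^^p) f x = Sh (int (p^k) * int p) f x] (mod int p)"
    by (rule Sh_p[OF assms])
  have 3: "int (p^k) * int p = int (p^Suc k)" by (simp add: mult.commute)
  show ?case using cong_trans[OF 1 2] unfolding e 3 .
qed

lemma choose_pm1:
  assumes "prime p"
  shows "j \<le> p - 1 \<Longrightarrow> [(-1::int)^(p-1+j) * int ((p-1) choose j) = 1] (mod int p)"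
proof (induction j)
  case 0
  have p0: "p > 0" using assms prime_gt_0_nat by blast
  have "(-1::int)^(p-1) = - ((-1)^p)" using p0 by (cases p) auto
  moreover have "[- ((-1::int)^p) = - (-1)] (mod int p)"
    using neg1_pow_prime[OF assms] cong_minus_minus_iff by blast
  ultimately show ?case by simp
next
  case (Suc j)
  have p0: "p > 0" using assms prime_gt_0_nat by blast
  have IH: "[(-1::int)^(p-1+j) * int ((p-1) choose j) = 1] (mod int p)" using Suc by simp
  have "p choose Suc j = ((p-1) choose j) + ((p-1) choose Suc j)"
    using p0 by (cases p) auto
  moreover have "p dvd (p choose Suc j)" using dvd_choose_prime[OF _ _ _ assms] Suc.prems p0 by auto
  ultimately have "int p dvd int ((p-1) choose Suc j) - (- int ((p-1) choose j))"
    by (metis add.commute diff_minus_eq_add of_nat_add of_nat_dvd_iff)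
  then have c: "[int ((p-1) choose Suc j) = - int ((p-1) choose j)] (mod int p)"
    by (simp add: cong_iff_dvd_diff)
  have "[(-1::int)^(p-1+Suc j) * int ((p-1) choose Suc j) = (-1::int)^(p-1+Suc j) * (- int ((p-1) choose j))] (mod int p)"
    by (rule cong_mult[OF cong_refl c])
  moreover have "(-1::int)^(p-1+Suc j) * (- int ((p-1) choose j)) = (-1::int)^(p-1+j) * int ((p-1) choose j)"
    by simp
  ultimately show ?case using IH cong_trans by metis
qed

definition Zp :: "nat \<Rightarrow> int \<Rightarrow> (int \<Rightarrow> int) \<Rightarrow> bool" where
  "Zp p s h \<longleftrightarrow> (\<forall>x. (\<Sum>i<p. h (x + s * int i)) = 0)"

lemma lemB:
  assumes "prime p" "Zp p (int (p^k)) h"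
  shows "[((Sh 1)^^(p^k * (p-1))) h x = 0] (mod int p)"
proof -
  have p0: "p > 0" using assms prime_gt_0_nat by blast
  have e: "(Sh 1)^^(p^k * (p-1)) = ((Sh 1)^^(p^k))^^(p-1)" by (simp add: funpow_mult)
  have 1: "[(((Sh 1)^^(p^k))^^(p-1)) h x = ((Sh (int (p^k)))^^(p-1)) h x] (mod int p)"
    by (rule iter_cong) (rule D_ppow[OF assms(1)])
  have 2: "((Sh (int (p^k)))^^(p-1)) h x = (\<Sum>j\<le>p-1. (-1)^(p-1+j) * int ((p-1) choose j) * h (x + int (p^k) * int j))"
    by (rule Sh_pow)
  have 3: "[(\<Sum>j\<le>p-1. (-1)^(p-1+j) * int ((p-1) choose j) * h (x + int (p^k) * int j))
          = (\<Sum>j\<le>p-1. 1 * h (x + int (p^k) * int j))] (mod int p)"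
    by (intro cong_sum cong_mult cong_refl choose_pm1[OF assms(1)]) simp
  have 4: "(\<Sum>j\<le>p-1. 1 * h (x + int (p^k) * int j)) = (\<Sum>j<p. h (x + int (p^k) * int j))"
    using p0 by (simp add: lessThan_Suc_atMost[symmetric])
  have 5: "(\<Sum>j<p. h (x + int (p^k) * int j)) = 0" using assms(2) unfolding Zp_def by blast
  show ?thesis using cong_trans[OF 1 3[folded 2]] unfolding e 4 5 .
qed

lemma Zp_pow:
  assumes "Zp p s h"
  shows "Zp p s (((Sh t)^^n) h)"
  unfolding Zp_def
proof
  fix x
  have "(\<Sum>i<p. ((Sh t)^^n) h (x + s * int i)) = (\<Sum>i<p. ((Sh t)^^n) (\<lambda>y. h (y + s * int i)) x)"
    by (simp add: Sh_pow_shift)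
  also have "\<dots> = ((Sh t)^^n) (\<lambda>y. \<Sum>i<p. h (y + s * int i)) x"
    by (simp add: Sh_pow_sum)
  also have "\<dots> = ((Sh t)^^n) (\<lambda>y. 0) x"
    using assms unfolding Zp_def by simp
  also have "\<dots> = 0" by (rule Sh_pow_zero)
  finally show "(\<Sum>i<p. ((Sh t)^^n) h (x + s * int i)) = 0" .
qed

lemma lemC':
  assumes "prime p"
  shows "Zp p (int (p^k)) h \<Longrightarrow> int p ^ m dvd ((Sh 1)^^(m * (p^k * (p-1)))) h x"
proof (induction m arbitrary: h x)
  case 0
  then show ?case by simp
next
  case (Suc m)
  define \<phi> where "\<phi> = p^k * (p-1)"
  define g where "g = ((Sh 1)^^\<phi>) h"
  have dv: "int p dvd g y" for y
    using lemB[OF assms Suc.prems, of y] unfolding g_def \<phi>_def by (simp add: cong_0_iff)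
  define g' where "g' y = g y div int p" for y
  have gg: "g = (\<lambda>y. int p * g' y)"
    using dv unfolding g'_def by (auto intro!: ext)
  have Zg: "Zp p (int (p^k)) g" unfolding g_def by (rule Zp_pow[OF Suc.prems])
  have pne: "int p \<noteq> 0" using assms prime_gt_0_nat by simp
  have Zg': "Zp p (int (p^k)) g'"
    unfolding Zp_def
  proof
    fix x
    have "int p * (\<Sum>i<p. g' (x + int (p^k) * int i)) = (\<Sum>i<p. g (x + int (p^k) * int i))"
      by (simp add: gg sum_distrib_left)
    also have "\<dots> = 0" using Zg unfolding Zp_def by blast
    finally show "(\<Sum>i<p. g' (x + int (p^k) * int i)) = 0" using pne by simp
  qed
  have IH: "int p ^ m dvd ((Sh 1)^^(m * \<phi>)) g' x" using Suc.IH[OF Zg'] unfolding \<phi>_def .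
  have sm: "Suc m * \<phi> = m * \<phi> + \<phi>" by simp
  have "((Sh 1)^^(Suc m * \<phi>)) h x = ((Sh 1)^^(m * \<phi>)) g x"
    unfolding g_def sm funpow_add by simp
  also have "\<dots> = int p * ((Sh 1)^^(m * \<phi>)) g' x"
    unfolding gg by (rule Sh_pow_cmult)
  finally have "((Sh 1)^^(Suc m * \<phi>)) h x = int p * ((Sh 1)^^(m * \<phi>)) g' x" .
  then show ?case using IH unfolding \<phi>_def by (simp add: mult_dvd_mono)
qed

lemma Sh_pow_per:
  assumes "\<And>y. f (y + c) = f y"
  shows "((Sh t)^^n) f (y + c) = ((Sh t)^^n) f y"
proof -
  have "(\<lambda>z. f (z + c)) = f" using assms by (intro ext) simp
  then show ?thesis using Sh_pow_shift[where t=t and n=n and f=f and c=c and x=y] by simp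
qed

lemma lemC:
  assumes "prime p"
  shows "(\<And>y. f (y + int (p^Suc k)) = f y) \<Longrightarrow> int p ^ b dvd ((Sh 1)^^(p^k + b * (p^k * (p-1)))) f x"
proof (induction b arbitrary: f x)
  case 0
  then show ?case by simp
next
  case (Suc b)
  define \<phi> where "\<phi> = p^k * (p-1)"
  have p2: "p \<ge> 2" using assms prime_ge_2_nat by blast
  have phige: "\<phi> \<ge> p^k" unfolding \<phi>_def using p2 by simp
  define h1 where "h1 y = f (y + int (p^k)) - f y" for y
  define g where "g y = (((Sh 1)^^(p^k)) f y - h1 y) div int p" for y
  have dv: "int p dvd ((Sh 1)^^(p^k)) f y - h1 y" for y
    using D_ppow[OF assms, of k f y] unfolding h1_def Sh_def by (simp add: cong_iff_dvd_diff)
  have D1: "((Sh 1)^^(p^k)) f = (\<lambda>y. h1 y + int p * g y)"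
  proof
    fix y show "((Sh 1)^^(p^k)) f y = h1 y + int p * g y"
      using dv[of y] unfolding g_def by simp
  qed
  have Zh1: "Zp p (int (p^k)) h1"
    unfolding Zp_def
  proof
    fix x
    have "(\<Sum>i<p. h1 (x + int (p^k) * int i)) = (\<Sum>i<p. f (x + int (p^k) * int (Suc i)) - f (x + int (p^k) * int i))"
      unfolding h1_def by (simp add: algebra_simps)
    also have "\<dots> = f (x + int (p^k) * int p) - f (x + int (p^k) * int 0)"
      by (rule sum_lessThan_telescope[where f = "\<lambda>i. f (x + int (p^k) * int i)"])
    also have "\<dots> = 0" using Suc.prems[of x] by (simp add: mult.commute)
    finally show "(\<Sum>i<p. h1 (x + int (p^k) * int i)) = 0" .
  qed
  have perg: "g (y + int (p^Suc k)) = g y" for y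
  proof -
    have a: "((Sh 1)^^(p^k)) f (y + int (p^Suc k)) = ((Sh 1)^^(p^k)) f y"
      by (rule Sh_pow_per) (rule Suc.prems)
    have "f (y + int (p^Suc k) + int (p^k)) = f (y + int (p^k) + int (p^Suc k))"
      by (simp add: ac_simps)
    also have "\<dots> = f (y + int (p^k))" by (rule Suc.prems)
    finally have b: "h1 (y + int (p^Suc k)) = h1 y" unfolding h1_def using Suc.prems[of y] by simp
    show ?thesis unfolding g_def a b ..
  qed
  have IH: "int p ^ b dvd ((Sh 1)^^(p^k + b * \<phi>)) g y" for y
    using Suc.IH[of g, OF perg] unfolding \<phi>_def .
  have n: "p^k + Suc b * \<phi> = Suc b * \<phi> + p^k" by simp
  have n2: "Suc b * \<phi> = (\<phi> - p^k) + (p^k + b * \<phi>)" using phige by simp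
  have "((Sh 1)^^(p^k + Suc b * \<phi>)) f x = ((Sh 1)^^(Suc b * \<phi>)) (\<lambda>y. h1 y + int p * g y) x"
    unfolding n funpow_add D1[symmetric] by simp
  also have "\<dots> = ((Sh 1)^^(Suc b * \<phi>)) h1 x + int p * ((Sh 1)^^(Suc b * \<phi>)) g x"
    by (simp add: Sh_pow_add Sh_pow_cmult)
  finally have eq: "((Sh 1)^^(p^k + Suc b * \<phi>)) f x = ((Sh 1)^^(Suc b * \<phi>)) h1 x + int p * ((Sh 1)^^(Suc b * \<phi>)) g x" .
  have t1: "int p ^ Suc b dvd ((Sh 1)^^(Suc b * \<phi>)) h1 x"
    using lemC'[OF assms Zh1] unfolding \<phi>_def .
  have "((Sh 1)^^(Suc b * \<phi>)) g x = ((Sh 1)^^(\<phi> - p^k)) (((Sh 1)^^(p^k + b * \<phi>)) g) x"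
    unfolding n2 funpow_add by simp
  moreover have "int p ^ b dvd ((Sh 1)^^(\<phi> - p^k)) (((Sh 1)^^(p^k + b * \<phi>)) g) x"
    by (rule Sh_pow_dvd) (rule IH)
  ultimately have t2: "int p ^ Suc b dvd int p * ((Sh 1)^^(Suc b * \<phi>)) g x"
    by (simp add: mult_dvd_mono)
  show ?case using eq t1 t2 unfolding \<phi>_def by (metis dvd_add)
qed

lemma newton: "f (int n) = (\<Sum>\<delta>\<le>n. int (n choose \<delta>) * ((Sh 1)^^\<delta>) f 0)"
proof (induction n arbitrary: f)
  case 0
  then show ?case by simp
next
  case (Suc n)
  define a where "a \<delta> = ((Sh 1)^^\<delta>) f 0" for \<delta>
  have s1: "((Sh 1)^^\<delta>) (\<lambda>y. f (y + 1)) 0 = a \<delta> + a (Suc \<delta>)" for \<delta>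
    unfolding a_def using Sh_pow_shift[where t=1 and n=\<delta> and f=f and c=1 and x=0] by (simp add: Sh_def)
  have "f (int (Suc n)) = (\<lambda>y. f (y + 1)) (int n)" by (simp add: add.commute)
  also have "\<dots> = (\<Sum>\<delta>\<le>n. int (n choose \<delta>) * (a \<delta> + a (Suc \<delta>)))"
    by (subst Suc.IH) (simp add: s1)
  also have "\<dots> = (\<Sum>\<delta>\<le>n. int (n choose \<delta>) * a \<delta>) + (\<Sum>\<delta>\<le>n. int (n choose \<delta>) * a (Suc \<delta>))"
    by (simp add: algebra_simps sum.distrib)
  also have "(\<Sum>\<delta>\<le>n. int (n choose \<delta>) * a \<delta>) = (\<Sum>\<delta>\<le>Suc n. int (n choose \<delta>) * a \<delta>)"
    by simp
  also have "\<dots> = a 0 + (\<Sum>\<delta>\<le>n. int (n choose Suc \<delta>) * a (Suc \<delta>))"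
    by (subst sum.atMost_Suc_shift) simp
  also have "a 0 + (\<Sum>\<delta>\<le>n. int (n choose Suc \<delta>) * a (Suc \<delta>)) + (\<Sum>\<delta>\<le>n. int (n choose \<delta>) * a (Suc \<delta>))
      = (\<Sum>\<delta>\<le>Suc n. int (Suc n choose \<delta>) * a \<delta>)"
    by (subst sum.atMost_Suc_shift) (simp add: algebra_simps sum.distrib)
  finally show ?case unfolding a_def .
qed

lemma int_binom_Suc_Suc: "int_binom (x + 1) (Suc k) = int_binom x k + int_binom x (Suc k)"
  using gbinomial_int_Suc_Suc[of x k] unfolding int_binom_def by (simp add: gbinomial_prod_rev atLeast0LessThan)

lemma int_binom_0 [simp]: "int_binom x 0 = 1"
  by (simp add: int_binom_def)

lemma int_binom_0_left: "int_binom 0 m = (if m = 0 then 1 else 0)"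
proof (cases m)
  case (Suc n)
  then have "(\<Prod>i<m. (0::int) - int i) = 0" by (intro prod_zero) auto
  then have "int_binom 0 m = 0" unfolding int_binom_def by (simp only:) simp
  then show ?thesis using Suc by simp
qed simp

lemma Sh_gchoose: "((Sh 1)^^\<delta>) (\<lambda>y. int_binom y k) x = (if \<delta> \<le> k then int_binom x (k - \<delta>) else 0)"
proof (induction \<delta> arbitrary: x)
  case 0
  then show ?case by simp
next
  case (Suc \<delta>)
  have "((Sh 1)^^Suc \<delta>) (\<lambda>y. int_binom y k) x = ((Sh 1)^^\<delta>) (\<lambda>y. int_binom y k) (x + 1) - ((Sh 1)^^\<delta>) (\<lambda>y. int_binom y k) x"
    by (simp add: Sh_def)
  also have "\<dots> = (if Suc \<delta> \<le> k then int_binom x (k - Suc \<delta>) else 0)"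
  proof (cases "Suc \<delta> \<le> k")
    case True
    then have "k - \<delta> = Suc (k - Suc \<delta>)" by simp
    then show ?thesis using True by (simp add: Suc.IH int_binom_Suc_Suc)
  next
    case False
    then show ?thesis using Suc.IH[of x] Suc.IH[of "x+1"] by (cases "\<delta> = k") auto
  qed
  finally show ?case .
qed

lemma Sh_poly:
  "((Sh 1)^^\<delta>) (polyfract_eval P d) x = (\<Sum>k\<le>d. P k * (if \<delta> \<le> k then int_binom x (k - \<delta>) else 0))"
proof -
  have "polyfract_eval P d = (\<lambda>y. \<Sum>k\<le>d. P k * int_binom y k)"
    by (intro ext) (simp add: polyfract_eval_def mult.commute)
  then show ?thesis by (simp add: Sh_pow_sum Sh_pow_cmult Sh_gchoose)
qed

lemma Sh_poly0: "((Sh 1)^^\<delta>) (polyfract_eval P d) 0 = (if \<delta> \<le> d then P \<delta> else 0)"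
proof -
  have "((Sh 1)^^\<delta>) (polyfract_eval P d) 0 = (\<Sum>k\<le>d. if k = \<delta> then P k else 0)"
    unfolding Sh_poly by (rule sum.cong) (auto simp: int_binom_0_left)
  then show ?thesis by simp
qed

lemma Sh_poly_big: "d < \<delta> \<Longrightarrow> ((Sh 1)^^\<delta>) (polyfract_eval P d) x = 0"
  unfolding Sh_poly by (intro sum.neutral) auto

lemma Sh_ind0:
  "((Sh 1)^^\<delta>) (indicator_res q x0) 0 = binom_q \<delta> q (int \<delta> - x0)"
proof -
  have "((Sh 1)^^\<delta>) (indicator_res q x0) 0 = (\<Sum>j\<le>\<delta>. if [int j = x0] (mod int q) then (-1)^(\<delta>+j) * int (\<delta> choose j) else 0)"
    unfolding Sh_pow indicator_res_def by (rule sum.cong) auto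
  also have "\<dots> = (\<Sum>k\<le>\<delta>. if [int k = int \<delta> - x0] (mod int q) then (-1)^k * int (\<delta> choose k) else 0)"
  proof -
    have t: "(if [int (\<delta> - k) = int \<delta> - x0] (mod int q) then (-1)^(\<delta> - k) * int (\<delta> choose (\<delta> - k)) else 0)
        = (if [int k = x0] (mod int q) then (-1)^(\<delta> + k) * int (\<delta> choose k) else 0)" if k: "k \<le> \<delta>" for k
    proof -
      have kk: "int (\<delta> - k) = int \<delta> - int k" using k by simp
      have c: "[int (\<delta> - k) = int \<delta> - x0] (mod int q) \<longleftrightarrow> [int k = x0] (mod int q)"
      proof -
        have "int \<delta> - int k - (int \<delta> - x0) = - (int k - x0)" by simp
        then show ?thesis unfolding kk cong_iff_dvd_diff by (simp only: dvd_minus_iff)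
      qed
      have "\<delta> + k = (\<delta> - k) + 2 * k" using k by simp
      then have "(-1::int)^(\<delta> + k) = (-1)^((\<delta> - k) + 2 * k)" by (simp only:)
      also have "\<dots> = (-1)^(\<delta> - k)" by (simp add: power_add power_mult)
      finally have e: "(-1::int)^(\<delta> + k) = (-1)^(\<delta> - k)" .
      show ?thesis using c e k by (simp add: binomial_symmetric[symmetric])
    qed
    show ?thesis
      apply (rule sum.reindex_bij_witness[where i = "\<lambda>k. \<delta> - k" and j = "\<lambda>k. \<delta> - k"])
      apply auto[4]
      subgoal for a using t[of a] by simp
      done
  qed
  also have "\<dots> = binom_q \<delta> q (int \<delta> - x0)"
  proof -
    have "{k. k \<le> \<delta> \<and> [int k = int \<delta> - x0] (mod int q)} = {k \<in> {..\<delta>}. [int k = int \<delta> - x0] (mod int q)}"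
      by auto
    then show ?thesis unfolding binom_q_def by (simp only: sum.inter_filter[OF finite_atMost])
  qed
  finally show ?thesis .
qed

lemma down_ext:
  fixes E :: "int \<Rightarrow> int"
  assumes A: "\<And>y. m dvd ((Sh 1)^^(Suc N)) E y" and B: "\<And>n::nat. m dvd E (int n)"
  shows "m dvd E x"
proof -
  have "\<forall>x. - int k \<le> x \<longrightarrow> m dvd E x" for k
  proof (induction k)
    case 0
    show ?case
    proof (intro allI impI)
      fix x :: int assume "- int 0 \<le> x"
      then have "x = int (nat x)" by simp
      then show "m dvd E x" using B by metis
    qed
  next
    case (Suc k)
    show ?case
    proof (intro allI impI)
      fix x assume x: "- int (Suc k) \<le> x"
      show "m dvd E x"
      proof (cases "- int k \<le> x")
        case True
        then show ?thesis using Suc.IH by blast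
      next
        case False
        define S where "S = (\<Sum>j\<le>N. (-1)^(Suc N + Suc j) * int (Suc N choose Suc j) * E (x + 1 * int (Suc j)))"
        have eq: "((Sh 1)^^(Suc N)) E x = (-1)^(Suc N + 0) * int (Suc N choose 0) * E (x + 1 * int 0) + S"
          unfolding Sh_pow S_def by (rule sum.atMost_Suc_shift)
        have "m dvd E (x + 1 * int (Suc j))" for j
          using Suc.IH False x by auto
        then have "m dvd S" unfolding S_def by (intro dvd_sum dvd_mult) auto
        then have "m dvd ((Sh 1)^^(Suc N)) E x - S" using A by (simp add: dvd_diff)
        then have "m dvd (-1)^(Suc N) * E x" using eq by simp
        then have "m dvd (-1)^(Suc N) * ((-1)^(Suc N) * E x)" by (rule dvd_mult)
        moreover have "(-1::int)^(Suc N) * ((-1)^(Suc N) * E x) = E x"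
        proof -
          have "(-1::int)^(Suc N) * (-1)^(Suc N) = 1" by (cases "even (Suc N)") auto
          then show ?thesis by (metis mult.assoc mult_1)
        qed
        ultimately show ?thesis by simp
      qed
    qed
  qed
  moreover have "- int (nat (- x)) \<le> x" by simp
  ultimately show ?thesis by blast
qed

lemma part1:
  fixes p \<alpha> \<beta> x0 :: nat
  assumes pr: "prime p" and a: "\<alpha> \<ge> 1" and b: "\<beta> \<ge> 1" and x0: "x0 < p ^ \<alpha>"
  shows "[indicator_res (p ^ \<alpha>) (int x0) x
      = polyfract_eval (\<lambda>\<delta>. binom_q \<delta> (p ^ \<alpha>) (int \<delta> - int x0)) (p ^ \<alpha> - 1 + (\<beta> - 1) * (p - 1) * p ^ (\<alpha> - 1)) x] (mod int (p ^ \<beta>))"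
proof -
  obtain k where k: "\<alpha> = Suc k" using a by (cases \<alpha>) auto
  obtain b' where b': "\<beta> = Suc b'" using b by (cases \<beta>) auto
  define d where "d = p ^ \<alpha> - 1 + (\<beta> - 1) * (p - 1) * p ^ (\<alpha> - 1)"
  define P where "P = (\<lambda>\<delta>. binom_q \<delta> (p ^ \<alpha>) (int \<delta> - int x0))"
  define ind where "ind = indicator_res (p ^ \<alpha>) (int x0)"
  define F where "F = polyfract_eval P d"
  define E where "E = (\<lambda>y. ind y - F y)"
  have p2: "p \<ge> 2" using pr prime_ge_2_nat by blast
  have pp: "p ^ k * p = p ^ k + p ^ k * (p - 1)" using p2 by (cases p) (simp_all add: algebra_simps)
  have pk: "p ^ k * p \<ge> 1" using p2 by simp
  have dN: "Suc d = p ^ k + \<beta> * (p ^ k * (p - 1))"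
  proof -
    obtain m where m: "p = Suc m" using p2 by (cases p) auto
    define s where "s = p ^ k"
    have s1: "s \<ge> 1" unfolding s_def using p2 by simp
    have "p ^ \<alpha> = s + s * m" unfolding s_def k m by simp
    then have "Suc d = s + s * m + b' * m * s" unfolding d_def b' k using s1 m by (simp add: s_def)
    then show ?thesis unfolding b' m s_def by (simp add: algebra_simps)
  qed
  have perind: "ind (y + int (p ^ Suc k)) = ind y" for y
    unfolding ind_def indicator_res_def k cong_def by simp
  have lc: "int p ^ \<beta> dvd ((Sh 1)^^(Suc d)) ind z" for z
    unfolding dN by (rule lemC[OF pr]) (rule perind)
  have bigind: "int p ^ \<beta> dvd ((Sh 1)^^\<delta>) ind y" if "Suc d \<le> \<delta>" for \<delta> y
  proof -
    have "\<delta> = (\<delta> - Suc d) + Suc d" using that by simp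
    then have "((Sh 1)^^\<delta>) ind y = ((Sh 1)^^(\<delta> - Suc d)) (((Sh 1)^^(Suc d)) ind) y"
      by (metis comp_apply funpow_add)
    then show ?thesis using Sh_pow_dvd[of "int p ^ \<beta>", OF lc] by simp
  qed
  have EA: "((Sh 1)^^\<delta>) E y = ((Sh 1)^^\<delta>) ind y - ((Sh 1)^^\<delta>) F y" for \<delta> y
    unfolding E_def by (rule Sh_pow_diff)
  have all\<delta>: "int p ^ \<beta> dvd ((Sh 1)^^\<delta>) E 0" for \<delta>
  proof (cases "\<delta> \<le> d")
    case True
    have "((Sh 1)^^\<delta>) E 0 = 0"
      unfolding EA ind_def F_def Sh_ind0 Sh_poly0 using True by (simp add: P_def)
    then show ?thesis by simp
  next
    case False
    then have "((Sh 1)^^\<delta>) E 0 = ((Sh 1)^^\<delta>) ind 0"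
      unfolding EA F_def using Sh_poly_big[of d \<delta>] by simp
    then show ?thesis using bigind[of \<delta> 0] False by simp
  qed
  have nonneg: "int p ^ \<beta> dvd E (int n)" for n
    by (subst newton) (intro dvd_sum dvd_mult all\<delta>)
  have top: "int p ^ \<beta> dvd ((Sh 1)^^(Suc d)) E y" for y
    unfolding EA F_def using Sh_poly_big[of d "Suc d"] lc by simp
  have "int p ^ \<beta> dvd E x" by (rule down_ext[OF top nonneg])
  then show ?thesis
    unfolding cong_iff_dvd_diff E_def ind_def F_def P_def d_def by simp
qed

lemma dvd_small_zero: "int q dvd z \<Longrightarrow> \<bar>z\<bar> < int q \<Longrightarrow> z = 0"
  using dvd_imp_le_int[of z "int q"] by fastforce

lemma binomq_small:
  assumes "\<delta> < q" "x0 < q"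
  shows "binom_q \<delta> q (int \<delta> - int x0) = (if x0 \<le> \<delta> then (-1)^(\<delta> - x0) * int (\<delta> choose (\<delta> - x0)) else 0)"
proof -
  have mem: "(k \<le> \<delta> \<and> [int k = int \<delta> - int x0] (mod int q)) \<longleftrightarrow> (x0 \<le> \<delta> \<and> k = \<delta> - x0)" for k
  proof
    assume "k \<le> \<delta> \<and> [int k = int \<delta> - int x0] (mod int q)"
    then have k: "k \<le> \<delta>" and c: "int q dvd int k - (int \<delta> - int x0)" by (auto simp: cong_iff_dvd_diff)
    have "\<bar>int k - (int \<delta> - int x0)\<bar> < int q" using k assms by linarith
    then have "int k - (int \<delta> - int x0) = 0" using dvd_small_zero c by blast
    then show "x0 \<le> \<delta> \<and> k = \<delta> - x0" by auto
  next
    assume "x0 \<le> \<delta> \<and> k = \<delta> - x0"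
    then show "k \<le> \<delta> \<and> [int k = int \<delta> - int x0] (mod int q)"
      by (auto simp: cong_refl of_nat_diff)
  qed
  have S1: "{k. k \<le> \<delta> \<and> [int k = int \<delta> - int x0] (mod int q)} = {k. x0 \<le> \<delta> \<and> k = \<delta> - x0}"
    by (simp only: mem)
  have S2: "{k. x0 \<le> \<delta> \<and> k = \<delta> - x0} = (if x0 \<le> \<delta> then {\<delta> - x0} else {})" by auto
  note S = S1[unfolded S2]
  show ?thesis unfolding binom_q_def S by simp
qed

lemma part3:
  fixes p \<alpha> x0 :: nat
  assumes pr: "prime p" and a: "\<alpha> \<ge> 1" and x0: "x0 < p ^ \<alpha>"
  shows "[indicator_res (p ^ \<alpha>) (int x0) x
             = (\<Sum>\<delta>\<in>{x0..p ^ \<alpha> - 1}. (-1) ^ (\<delta> - x0) * int (\<delta> choose (\<delta> - x0)) * int_binom x \<delta>)] (mod int p)"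
proof -
  have c: "[indicator_res (p ^ \<alpha>) (int x0) x
      = polyfract_eval (\<lambda>\<delta>. binom_q \<delta> (p ^ \<alpha>) (int \<delta> - int x0)) (p ^ \<alpha> - 1 + (1 - 1) * (p - 1) * p ^ (\<alpha> - 1)) x] (mod int (p ^ 1))"
    by (rule part1[OF pr a _ x0]) simp
  have q0: "p ^ \<alpha> > 0" using pr prime_gt_0_nat by simp
  have "polyfract_eval (\<lambda>\<delta>. binom_q \<delta> (p ^ \<alpha>) (int \<delta> - int x0)) (p ^ \<alpha> - 1) x
      = (\<Sum>\<delta>\<le>p ^ \<alpha> - 1. if x0 \<le> \<delta> then (-1) ^ (\<delta> - x0) * int (\<delta> choose (\<delta> - x0)) * int_binom x \<delta> else 0)"
    unfolding polyfract_eval_def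
  proof (rule sum.cong)
    fix \<delta> assume "\<delta> \<in> {..p ^ \<alpha> - 1}"
    then have "\<delta> \<le> p ^ \<alpha> - 1" by simp
    then have "\<delta> < p ^ \<alpha>" using q0 by linarith
    then show "int_binom x \<delta> * binom_q \<delta> (p ^ \<alpha>) (int \<delta> - int x0) =
        (if x0 \<le> \<delta> then (-1) ^ (\<delta> - x0) * int (\<delta> choose (\<delta> - x0)) * int_binom x \<delta> else 0)"
      using binomq_small[OF _ x0] by simp
  qed simp
  also have "\<dots> = (\<Sum>\<delta>\<in>{..p ^ \<alpha> - 1} \<inter> {\<delta>. x0 \<le> \<delta>}. (-1) ^ (\<delta> - x0) * int (\<delta> choose (\<delta> - x0)) * int_binom x \<delta>)"
    by (simp add: sum.inter_restrict)
  also have "{..p ^ \<alpha> - 1} \<inter> {\<delta>. x0 \<le> \<delta>} = {x0..p ^ \<alpha> - 1}" by auto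
  finally show ?thesis using c by simp
qed

theorem theorem3p6:
  fixes p \<alpha> \<beta> x0 :: nat
  assumes "prime p" and "\<alpha> \<ge> 1" and "\<beta> \<ge> 1" and "x0 < p ^ \<alpha>"
  defines "d \<equiv> p ^ \<alpha> - 1 + (\<beta> - 1) * (p - 1) * p ^ (\<alpha> - 1)"
  shows "(\<forall>x::int. [indicator_res (p ^ \<alpha>) (int x0) x
             = polyfract_eval (\<lambda>\<delta>. binom_q \<delta> (p ^ \<alpha>) (int \<delta> - int x0)) d x] (mod int (p ^ \<beta>)))
       \<and> (\<forall>x::int. [polyfract_eval (\<lambda>\<delta>. binom_q \<delta> (p ^ \<alpha>) (int \<delta> - int x0)) d (x + int (p ^ \<alpha>))
             = polyfract_eval (\<lambda>\<delta>. binom_q \<delta> (p ^ \<alpha>) (int \<delta> - int x0)) d x] (mod int (p ^ \<beta>)))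
       \<and> (\<forall>x::int. [indicator_res (p ^ \<alpha>) (int x0) x
             = (\<Sum>\<delta>\<in>{x0..p ^ \<alpha> - 1}. (-1) ^ (\<delta> - x0) * int (\<delta> choose (\<delta> - x0)) * int_binom x \<delta>)] (mod int p))
       \<and> (\<forall>x::int. [indicator_res (p ^ \<alpha>) 0 x
             = (\<Sum>\<delta>\<in>{0..p ^ \<alpha> - 1}. (-1) ^ \<delta> * int_binom x \<delta>)] (mod int p))"
  proof -
  define F where "F = polyfract_eval (\<lambda>\<delta>. binom_q \<delta> (p ^ \<alpha>) (int \<delta> - int x0)) d"
  have P1: "\<forall>x::int. [indicator_res (p ^ \<alpha>) (int x0) x = F x] (mod int (p ^ \<beta>))"
    unfolding F_def d_def using part1[OF assms(1-4)] by blast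
  have per: "indicator_res (p ^ \<alpha>) (int x0) (x + int (p ^ \<alpha>)) = indicator_res (p ^ \<alpha>) (int x0) x" for x
    unfolding indicator_res_def cong_def by simp
  have P2: "\<forall>x::int. [F (x + int (p ^ \<alpha>)) = F x] (mod int (p ^ \<beta>))"
  proof
    fix x :: int
    have 1: "[F (x + int (p ^ \<alpha>)) = indicator_res (p ^ \<alpha>) (int x0) (x + int (p ^ \<alpha>))] (mod int (p ^ \<beta>))"
      using P1 cong_sym by blast
    show "[F (x + int (p ^ \<alpha>)) = F x] (mod int (p ^ \<beta>))"
      using cong_trans[OF 1[unfolded per] P1[rule_format, of x]] .
  qed
  have P3: "\<forall>x::int. [indicator_res (p ^ \<alpha>) (int x0) x
             = (\<Sum>\<delta>\<in>{x0..p ^ \<alpha> - 1}. (-1) ^ (\<delta> - x0) * int (\<delta> choose (\<delta> - x0)) * int_binom x \<delta>)] (mod int p)"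
    using part3[OF assms(1,2,4)] by blast
  have q0: "0 < p ^ \<alpha>" using assms(1) prime_gt_0_nat by simp
  have P4: "\<forall>x::int. [indicator_res (p ^ \<alpha>) 0 x
             = (\<Sum>\<delta>\<in>{0..p ^ \<alpha> - 1}. (-1) ^ \<delta> * int_binom x \<delta>)] (mod int p)"
    using part3[OF assms(1,2) q0] by simp
  show ?thesis using P1 P2 P3 P4 unfolding F_def by blast
qed

end
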